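(* Assume $\operatorname{add}(\mathcal N)=\operatorname{cov}(\mathcal N)$. Then $\mathcal{ND}_{\operatorname{add}(\mathcal N)}$ is strongly $\mathfrak c$-algebrable in $\left(\mathbb R^{[0,1]}\right)^{\operatorname{add}(\mathcal N)}$.
   Context: For a regular infinite cardinal $\kappa$, a $\kappa$-sequence $(x_\alpha)_{\alpha<\kappa}$ converges to $x$ if for every neighbourhood $U$ of $x$ there is $\alpha_0<\kappa$ with $x_\alpha\in U$ for all $\alpha_0<\alpha<\kappa$; $\left(\mathbb R^{[0,1]}\right)^{\kappa}$ is the commutative real algebra of $\kappa$-sequences of functions $[0,1]\to\mathbb R$ with indexwise operations. $\lambda$ is Lebesgue measure, $\mathcal N$ the null subsets of $[0,1]$; $\operatorname{add}(\mathcal N)$ the least cardinality of a family of null sets with non-null union, $\operatorname{cov}(\mathcal N)$ the least cardinality of a family of null sets covering $[0,1]$. $\mathcal{ND}_{\kappa}$: $\kappa$-sequences of Lebesgue measurable $f_\alpha:[0,1]\to\mathbb R$ such that there is an integrable $g$ with $|f_\alpha|\le g$ a.e. for all $\alpha$, $f_\alpha\to f$ a.e. for some integrable $f$, and $\int|f_\alpha-f|\,d\lambda\not\to0$. $S$ is strongly $\mu$-algebrable if there is a set $X$ of $\mu$ algebraically independent elements such that every nonzero element of the (non-unital) algebra generated by $X$ belongs to $S$. *)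

theory Defs
  imports "HOL-Analysis.Analysis"
begin

definition nullsets01 :: "real set set" where
  "nullsets01 = {A. A \<subseteq> {0..1} \<and> A \<in> null_sets lebesgue}"

definition is_addN :: "'i set \<Rightarrow> bool" where
  "is_addN I \<longleftrightarrow>
     (\<exists>F. F \<subseteq> nullsets01 \<and> \<Union>F \<notin> nullsets01 \<and> (card_of F, card_of I) \<in> ordIso) \<and>
     (\<forall>F. F \<subseteq> nullsets01 \<and> (card_of F, card_of I) \<in> ordLess \<longrightarrow> \<Union>F \<in> nullsets01)"

definition is_covN :: "'i set \<Rightarrow> bool" where
  "is_covN I \<longleftrightarrow>
     (\<exists>F. F \<subseteq> nullsets01 \<and> \<Union>F = {0..1} \<and> (card_of F, card_of I) \<in> ordIso) \<and>
     (\<forall>F. F \<subseteq> nullsets01 \<and> (card_of F, card_of I) \<in> ordLess \<longrightarrow> \<Union>F \<noteq> {0..1})"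

text \<open>Convergence of a kappa-sequence indexed by the well-order r (the initial ordinal kappa).\<close>
definition kconv :: "'i rel \<Rightarrow> ('i \<Rightarrow> 'b::topological_space) \<Rightarrow> 'b \<Rightarrow> bool" where
  "kconv r x L \<longleftrightarrow>
     (\<forall>U. open U \<and> L \<in> U \<longrightarrow> (\<exists>a0. \<forall>a. (a0, a) \<in> r \<and> a \<noteq> a0 \<longrightarrow> x a \<in> U))"

definition ND :: "'i rel \<Rightarrow> ('i \<Rightarrow> real \<Rightarrow> real) set" where
  "ND r = {F. (\<forall>a. F a \<in> borel_measurable (lebesgue_on {0..1})) \<and>
     (\<exists>g. integrable (lebesgue_on {0..1}) g \<and>
          (\<forall>a. AE t in lebesgue_on {0..1}. \<bar>F a t\<bar> \<le> g t)) \<and>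
     (\<exists>f. integrable (lebesgue_on {0..1}) f \<and>
          (AE t in lebesgue_on {0..1}. kconv r (\<lambda>a. F a t) (f t)) \<and>
          \<not> kconv r (\<lambda>a. LINT t|lebesgue_on {0..1}. \<bar>F a t - f t\<bar>) 0)}"

text \<open>Polynomials without constant term over a set of generators: coefficient functions c on
  monomials m (exponent functions with finite nonempty support); evaluation in the algebra
  of kappa-sequences of functions with indexwise (and pointwise) operations.\<close>
definition poly_eval :: "((('i \<Rightarrow> real \<Rightarrow> real) \<Rightarrow> nat) \<Rightarrow> real) \<Rightarrow> ('i \<Rightarrow> real \<Rightarrow> real)" where
  "poly_eval c = (\<lambda>a t. \<Sum>m\<in>{m. c m \<noteq> 0}. c m * (\<Prod>g\<in>{g. m g \<noteq> 0}. (g a t) ^ m g))"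

definition nonconst_poly_over :: "('i \<Rightarrow> real \<Rightarrow> real) set \<Rightarrow> ((('i \<Rightarrow> real \<Rightarrow> real) \<Rightarrow> nat) \<Rightarrow> real) \<Rightarrow> bool" where
  "nonconst_poly_over X c \<longleftrightarrow> finite {m. c m \<noteq> 0} \<and> {m. c m \<noteq> 0} \<noteq> {} \<and>
     (\<forall>m. c m \<noteq> 0 \<longrightarrow> finite {g. m g \<noteq> 0} \<and> {g. m g \<noteq> 0} \<noteq> {} \<and> {g. m g \<noteq> 0} \<subseteq> X)"

text \<open>Strong continuum-algebrability of S inside (R^[0,1])^kappa: elements of the ambient algebra
  are represented by functions vanishing outside [0,1]; X is algebraically independent
  (no nonzero polynomial without constant term vanishes on X) and every such polynomial
  value lies in S.\<close>
definition strongly_c_algebrable :: "('i \<Rightarrow> real \<Rightarrow> real) set \<Rightarrow> bool" where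
  "strongly_c_algebrable S \<longleftrightarrow>
     (\<exists>X. (\<forall>G\<in>X. \<forall>a t. t \<notin> {0..1} \<longrightarrow> G a t = 0) \<and>
          (card_of X, card_of (UNIV :: real set)) \<in> ordIso \<and>
          (\<forall>c. nonconst_poly_over X c \<longrightarrow> (\<exists>a t. poly_eval c a t \<noteq> 0) \<and> poly_eval c \<in> S))"

end

theory Submission imports Defs "HOL-Analysis.Analysis" "HOL-Algebra.Free_Abelian_Groups"
begin


lemma rat_vs: "vector_space (\<lambda>q (x::real). real_of_rat q * x)"
  by unfold_locales (auto simp: algebra_simps of_rat_add of_rat_mult)

lemma hamel:
  obtains H :: "real set" where
    "\<And>T u v. finite T \<Longrightarrow> T \<subseteq> H \<Longrightarrow> (\<Sum>v\<in>T. real_of_rat (u v) * v) = 0 \<Longrightarrow> v \<in> T \<Longrightarrow> u v = 0"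
    "|H| =o |UNIV :: real set|"
proof -
  interpret Q: vector_space "\<lambda>q (x::real). real_of_rat q * x" by (rule rat_vs)
  obtain B where B: "Q.independent B" "UNIV \<subseteq> Q.span B"
    using Q.basis_exists[of UNIV] by blast
  have ind: "\<And>T u v. finite T \<Longrightarrow> T \<subseteq> B \<Longrightarrow> (\<Sum>v\<in>T. real_of_rat (u v) * v) = 0 \<Longrightarrow> v \<in> T \<Longrightarrow> u v = 0"
    using Q.independentD[OF B(1)] by blast
  define \<phi> where "\<phi> = (\<lambda>S::(rat\<times>real) set. \<Sum>p\<in>S. real_of_rat (fst p) * snd p)"
  have sub: "(UNIV::real set) \<subseteq> \<phi> ` Fpow ((UNIV::rat set) \<times> B)"
  proof
    fix y :: real
    have "y \<in> Q.span B" using B(2) by blast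
    then obtain t r where tr: "finite t" "t \<subseteq> B" "(\<Sum>a\<in>t. real_of_rat (r a) * a) = y"
      unfolding Q.span_explicit by blast
    let ?S = "(\<lambda>v. (r v, v)) ` t"
    have "inj_on (\<lambda>v. (r v, v)) t" by (auto simp: inj_on_def)
    then have "\<phi> ?S = y" unfolding \<phi>_def using tr by (simp add: sum.reindex)
    moreover have "?S \<in> Fpow ((UNIV::rat set) \<times> B)" using tr by (auto simp: Fpow_def)
    ultimately show "y \<in> \<phi> ` Fpow ((UNIV::rat set) \<times> B)" by blast
  qed
  have le1: "|UNIV::real set| \<le>o |Fpow ((UNIV::rat set) \<times> B)|"
    using card_of_mono1[OF sub] card_of_image[of \<phi> "Fpow ((UNIV::rat set) \<times> B)"] ordLeq_transitive by blast
  have infB: "infinite B"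
  proof
    assume "finite B"
    then have "countable (Fpow ((UNIV::rat set) \<times> B))"
      by (intro countable_Fpow countable_SIGMA) (auto intro: countable_finite)
    then have "countable (UNIV::real set)" 
      using sub by (metis countable_image countable_subset)
    then show False using uncountable_UNIV_real by blast
  qed
  have "|Fpow ((UNIV::rat set) \<times> B)| =o |(UNIV::rat set) \<times> B|"
    using infB by (intro card_of_Fpow_infinite) (force simp add: finite_cartesian_product_iff)
  moreover have "|(UNIV::rat set) \<times> B| =o |B|"
  proof -
    have "|UNIV::rat set| \<le>o |B|"
      using infB infinite_iff_card_of_countable[of "UNIV::rat set" B] by (simp add: infinite_UNIV_char_0)
    then show ?thesis using card_of_Times_infinite[OF infB, of "UNIV::rat set"] by simp
  qed
  ultimately have "|UNIV::real set| \<le>o |B|"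
    using le1 by (metis ordIso_iff_ordLeq ordLeq_transitive)
  moreover have "|B| \<le>o |UNIV::real set|" by simp
  ultimately have "|B| =o |UNIV::real set|" by (simp add: ordIso_iff_ordLeq)
  then show ?thesis using that ind by blast
qed


lemma exp_indep:
  fixes d :: "real \<Rightarrow> real"
  assumes "finite L" "\<forall>t\<in>{0<..<1}. (\<Sum>l\<in>L. d l * exp (l*t)) = 0"
  shows "\<forall>l\<in>L. d l = 0"
  using assms
proof (induction L arbitrary: d rule: finite_induct)
  case empty then show ?case by simp
next
  case (insert \<mu> L)
  define h where "h = (\<lambda>t. \<Sum>l\<in>insert \<mu> L. d l * exp ((l-\<mu>)*t))"
  define h' where "h' = (\<lambda>t. \<Sum>l\<in>insert \<mu> L. d l * ((l-\<mu>) * exp ((l-\<mu>)*t)))"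
  have h0: "h t = 0" if "t \<in> {0<..<1}" for t
  proof -
    have "h t = exp (-\<mu>*t) * (\<Sum>l\<in>insert \<mu> L. d l * exp (l*t))"
      unfolding h_def sum_distrib_left
      by (intro sum.cong refl) (simp add: mult_exp_exp algebra_simps)
    then show ?thesis using insert.prems that by simp
  qed
  have der: "(h has_field_derivative h' t) (at t)" for t
  proof -
    have "((\<lambda>t. d l * exp ((l-\<mu>)*t)) has_field_derivative d l * ((l-\<mu>) * exp ((l-\<mu>)*t))) (at t)" for l
      by (auto intro!: derivative_eq_intros)
    then show ?thesis unfolding h_def h'_def by (rule DERIV_sum)
  qed
  have h'0: "h' t = 0" if t: "t \<in> {0<..<1}" for t
  proof (rule DERIV_local_const[OF der, where d="min t (1-t)"])
    show "0 < min t (1-t)" using t by auto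
    show "\<forall>y. \<bar>t - y\<bar> < min t (1 - t) \<longrightarrow> h t = h y"
    proof (intro allI impI)
      fix y assume "\<bar>t - y\<bar> < min t (1 - t)"
      then have "y \<in> {0<..<1}" using t by (auto simp: abs_less_iff)
      then show "h t = h y" using t h0 by simp
    qed
  qed
  have "\<forall>t\<in>{0<..<1}. (\<Sum>l\<in>L. (d l * (l-\<mu>)) * exp (l*t)) = 0"
  proof
    fix t :: real assume t: "t \<in> {0<..<1}"
    have "(\<Sum>l\<in>L. (d l * (l-\<mu>)) * exp (l*t)) = (\<Sum>l\<in>insert \<mu> L. (d l * (l-\<mu>)) * exp (l*t))"
      using insert.hyps by simp
    also have "\<dots> = exp (\<mu>*t) * h' t"
      unfolding h'_def sum_distrib_left
      by (intro sum.cong refl) (simp add: mult_exp_exp algebra_simps)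
    also have "\<dots> = 0" using h'0[OF t] by simp
    finally show "(\<Sum>l\<in>L. (d l * (l-\<mu>)) * exp (l*t)) = 0" .
  qed
  from insert.IH[OF this] have dL: "\<forall>l\<in>L. d l = 0"
    using insert.hyps by auto
  have "(\<Sum>l\<in>insert \<mu> L. d l * exp (l*(1/2))) = 0" using insert.prems[rule_format, of "1/2"] by simp
  then have "d \<mu> * exp (\<mu>*(1/2)) = 0" using insert.hyps dL by simp
  then have "d \<mu> = 0" by simp
  with dL show ?case by simp
qed



lemma poly_part:
  fixes H :: "real set" and Bs :: "'i \<Rightarrow> real set" and Gen :: "real \<Rightarrow> 'i \<Rightarrow> real \<Rightarrow> real"
  assumes hind: "\<And>T u v. finite T \<Longrightarrow> T \<subseteq> H \<Longrightarrow> (\<Sum>v\<in>T. real_of_rat (u v) * v) = 0 \<Longrightarrow> v \<in> T \<Longrightarrow> u v = 0"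
    and Gen_def: "\<And>x. Gen x = (\<lambda>a t. if t \<in> {0..1} \<and> t \<notin> Bs a then exp (x*t) else 0)"
    and injG: "inj_on Gen H"
    and c: "nonconst_poly_over (Gen ` H) c"
  shows "\<exists>q. continuous_on UNIV q \<and> (\<exists>t\<in>{0<..<1}. q t \<noteq> 0) \<and>
           (\<forall>a t. poly_eval c a t = (if t\<in>{0..1} \<and> t\<notin>Bs a then q t else 0))"
proof -
  let ?X = "Gen ` H"
  define xinv where "xinv = inv_into H Gen"
  have xinvH: "xinv g \<in> H" and Gx: "Gen (xinv g) = g" if "g \<in> ?X" for g
    using that injG by (auto simp: xinv_def inv_into_into f_inv_into_f)
  have xinv_inj: "inj_on xinv ?X"
    by (metis (no_types, lifting) Gx inj_onI)
  define M where "M = {m. c m \<noteq> 0}"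
  define S where "S = (\<lambda>m::('i \<Rightarrow> real \<Rightarrow> real) \<Rightarrow> nat. {g. m g \<noteq> 0})"
  have finM: "finite M" and neM: "M \<noteq> {}"
    and finS: "\<And>m. m \<in> M \<Longrightarrow> finite (S m)" and neS: "\<And>m. m \<in> M \<Longrightarrow> S m \<noteq> {}"
    and SX: "\<And>m. m \<in> M \<Longrightarrow> S m \<subseteq> ?X"
    using c unfolding nonconst_poly_over_def M_def S_def by auto
  define lam where "lam = (\<lambda>m. \<Sum>g\<in>S m. real (m g) * xinv g)"
  have lamT: "lam m = (\<Sum>v\<in>T. real (m (Gen v)) * v)"
    if m: "m \<in> M" and T: "finite T" "T \<subseteq> H" "xinv ` S m \<subseteq> T" for m T
  proof -
    have inj: "inj_on xinv (S m)" using xinv_inj SX[OF m] inj_on_subset by blast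
    have "lam m = (\<Sum>v\<in>xinv ` S m. real (m (Gen v)) * v)"
      unfolding lam_def using inj SX[OF m] Gx by (simp add: sum.reindex subset_iff)
    also have "\<dots> = (\<Sum>v\<in>T. real (m (Gen v)) * v)"
    proof (rule sum.mono_neutral_left[OF T(1) T(3)])
      show "\<forall>i\<in>T - xinv ` S m. real (m (Gen i)) * i = 0"
      proof
        fix v assume v: "v \<in> T - xinv ` S m"
        have "m (Gen v) = 0"
        proof (rule ccontr)
          assume "m (Gen v) \<noteq> 0"
          then have "Gen v \<in> S m" by (simp add: S_def)
          moreover have "xinv (Gen v) = v" using v T injG by (auto simp: xinv_def)
          ultimately show False using v by (metis image_eqI DiffD2)
        qed
        then show "real (m (Gen v)) * v = 0" by simp
      qed
    qed
    finally show ?thesis .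
  qed
  have lam_inj: "inj_on lam M"
  proof (rule inj_onI)
    fix m m' assume m: "m \<in> M" and m': "m' \<in> M" and eq: "lam m = lam m'"
    define T where "T = xinv ` (S m \<union> S m')"
    have T: "finite T" "T \<subseteq> H" "xinv ` S m \<subseteq> T" "xinv ` S m' \<subseteq> T"
      using finS[OF m] finS[OF m'] SX[OF m] SX[OF m'] xinvH unfolding T_def by auto
    have "(\<Sum>v\<in>T. real_of_rat (of_nat (m (Gen v)) - of_nat (m' (Gen v))) * v) =
          (\<Sum>v\<in>T. real (m (Gen v)) * v) - (\<Sum>v\<in>T. real (m' (Gen v)) * v)"
      by (simp add: of_rat_diff left_diff_distrib sum_subtractf)
    also have "\<dots> = 0" using lamT[OF m T(1-3)] lamT[OF m' T(1,2,4)] eq by simp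
    finally have z: "(\<Sum>v\<in>T. real_of_rat (of_nat (m (Gen v)) - of_nat (m' (Gen v))) * v) = 0" .
    show "m = m'"
    proof
      fix g
      show "m g = m' g"
      proof (cases "g \<in> S m \<union> S m'")
        case True
        then have "xinv g \<in> T" unfolding T_def by blast
        from hind[OF T(1) T(2) z this] have "m (Gen (xinv g)) = m' (Gen (xinv g))" by simp
        moreover have "Gen (xinv g) = g" using True SX[OF m] SX[OF m'] Gx by blast
        ultimately show ?thesis by simp
      next
        case False then show ?thesis by (simp add: S_def)
      qed
    qed
  qed
  define q where "q = (\<lambda>t. \<Sum>m\<in>M. c m * exp (lam m * t))"
  have contq: "continuous_on UNIV q" unfolding q_def by (intro continuous_intros)
  have qne: "\<exists>t\<in>{0<..<1}. q t \<noteq> 0"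
  proof (rule ccontr)
    assume "\<not> ?thesis"
    then have q0: "\<forall>t\<in>{0<..<1}. q t = 0" by blast
    define d where "d = (\<lambda>l. c (the_inv_into M lam l))"
    have "\<forall>t\<in>{0<..<1}. (\<Sum>l\<in>lam ` M. d l * exp (l*t)) = 0"
    proof
      fix t :: real assume t: "t \<in> {0<..<1}"
      have "(\<Sum>l\<in>lam ` M. d l * exp (l*t)) = (\<Sum>m\<in>M. d (lam m) * exp (lam m*t))"
        using lam_inj by (simp add: sum.reindex)
      also have "\<dots> = q t" unfolding q_def d_def
        using lam_inj by (intro sum.cong refl) (simp add: the_inv_into_f_f)
      finally show "(\<Sum>l\<in>lam ` M. d l * exp (l*t)) = 0" using q0 t by simp
    qed
    from exp_indep[OF _ this] finM have "\<forall>m\<in>M. d (lam m) = 0" by simp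
    then have "\<forall>m\<in>M. c m = 0" unfolding d_def using lam_inj by (simp add: the_inv_into_f_f)
    then show False using neM unfolding M_def by auto
  qed
  have peval: "poly_eval c a t = (if t\<in>{0..1} \<and> t\<notin>Bs a then q t else 0)" for a t
  proof (cases "t\<in>{0..1} \<and> t\<notin>Bs a")
    case True
    have "poly_eval c a t = (\<Sum>m\<in>M. c m * (\<Prod>g\<in>S m. (g a t) ^ m g))"
      unfolding poly_eval_def M_def S_def by simp
    also have "\<dots> = q t" unfolding q_def
    proof (intro sum.cong refl)
      fix m assume m: "m \<in> M"
      have "(\<Prod>g\<in>S m. (g a t) ^ m g) = (\<Prod>g\<in>S m. exp (real (m g) * xinv g * t))"
      proof (intro prod.cong refl)
        fix g assume g: "g \<in> S m"
        then have "g a t = exp (xinv g * t)"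
          using Gx[of g] SX[OF m] True Gen_def[of "xinv g"] by (metis (no_types, lifting) subsetD)
        then show "(g a t) ^ m g = exp (real (m g) * xinv g * t)"
          by (simp add: exp_of_nat_mult[symmetric] mult.assoc)
      qed
      also have "\<dots> = exp (lam m * t)"
        unfolding lam_def using finS[OF m] by (simp add: exp_sum sum_distrib_right)
      finally show "c m * (\<Prod>g\<in>S m. (g a t) ^ m g) = c m * exp (lam m * t)" by simp
    qed
    finally show ?thesis using True by simp
  next
    case False
    have "poly_eval c a t = (\<Sum>m\<in>M. c m * (\<Prod>g\<in>S m. (g a t) ^ m g))"
      unfolding poly_eval_def M_def S_def by simp
    also have "\<dots> = 0"
    proof (intro sum.neutral ballI)
      fix m assume m: "m \<in> M"
      obtain g where g: "g \<in> S m" using neS[OF m] by blast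
      have "g a t = 0" using g SX[OF m] False Gen_def by auto
      then have "(g a t) ^ m g = 0" using g by (simp add: S_def)
      then have "(\<Prod>g\<in>S m. (g a t) ^ m g) = 0" using g finS[OF m] by (metis prod_zero_iff)
      then show "c m * (\<Prod>g\<in>S m. (g a t) ^ m g) = 0" by simp
    qed
    finally show ?thesis using False by (simp only: if_False)
  qed
  show ?thesis using contq qne peval by blast
qed



lemma meas_part:
  fixes r :: "'i rel" and Bs :: "'i \<Rightarrow> real set" and q :: "real \<Rightarrow> real" and P :: "'i \<Rightarrow> real \<Rightarrow> real"
  assumes Bnull: "\<And>a. Bs a \<in> null_sets lebesgue"
    and contq: "continuous_on UNIV q" and qne: "\<exists>t\<in>{0<..<1}. q t \<noteq> 0"
    and P: "\<And>a t. P a t = (if t\<in>{0..1} \<and> t\<notin>Bs a then q t else 0)"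
    and ev: "\<forall>t\<in>{0..1}. \<exists>a0. \<forall>a. (a0,a)\<in>r \<and> a\<noteq>a0 \<longrightarrow> t \<in> Bs a"
    and nomax: "\<forall>a0. \<exists>a. (a0,a)\<in>r \<and> a\<noteq>a0"
  shows "P \<in> ND r \<and> (\<exists>a t. P a t \<noteq> 0)"
proof -
  let ?L = "lebesgue_on {0..1::real}"
  have S01: "{0..1::real} \<in> sets lebesgue" by simp
  have intq: "integrable ?L q"
    by (rule continuous_imp_integrable_real) (use contq continuous_on_subset in blast)
  have intaq: "integrable ?L (\<lambda>t. \<bar>q t\<bar>)" using intq by simp
  define I where "I = (LINT t|?L. \<bar>q t\<bar>)"
  have Ipos: "I > 0"
  proof (rule ccontr)
    assume "\<not> I > 0"
    moreover have "I \<ge> 0" unfolding I_def by simp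
    ultimately have I0: "I = 0" by simp
    have hi: "((\<lambda>t. \<bar>q t\<bar>) has_integral 0) (cbox 0 1)"
      using has_integral_integral_lebesgue_on[OF intaq S01] I0 unfolding I_def by simp
    obtain t where t: "t \<in> {0<..<1}" "q t \<noteq> 0" using qne by blast
    have "\<bar>q t\<bar> = 0"
    proof (rule has_integral_0_cbox_imp_0[OF _ _ hi])
      show "continuous_on (cbox 0 1) (\<lambda>t. \<bar>q t\<bar>)"
        using contq continuous_on_subset by (intro continuous_intros) blast+
      show "box (0::real) 1 \<noteq> {}" by simp
      show "t \<in> cbox 0 1" using t by simp
    qed simp
    then show False using t by simp
  qed
  have measq: "q \<in> borel_measurable ?L" using intq by (rule borel_measurable_integrable)
  have measP: "P a \<in> borel_measurable ?L" for a
  proof -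
    have Bs: "Bs a \<inter> space ?L \<in> sets ?L"
      using null_set_Int1[OF Bnull S01] null_sets_restrict_space[OF S01]
      by (metis Int_commute Int_lower2 null_setsD2 space_lebesgue_on)
    have "(\<lambda>t. if t \<in> Bs a then 0 else q t) \<in> borel_measurable ?L"
      by (rule measurable_If_set[OF _ measq Bs]) simp
    then show ?thesis
      by (rule measurable_cong[THEN iffD1, rotated]) (simp add: P)
  qed
  have AEB: "AE t in ?L. t \<notin> Bs a" for a
  proof -
    have "{0..1} \<inter> Bs a \<in> null_sets ?L"
      using null_set_Int1[OF Bnull S01] null_sets_restrict_space[OF S01] by blast
    from AE_not_in[OF this] show ?thesis by (rule AE_mp) auto
  qed
  have AEq: "AE t in ?L. \<bar>P a t - 0\<bar> = \<bar>q t\<bar>" for a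
    using AEB[of a] by (rule AE_mp) (auto simp: P)
  have intP: "(LINT t|?L. \<bar>P a t - 0\<bar>) = I" for a
    unfolding I_def using measP measq by (intro integral_cong_AE AEq) auto
  have kc: "kconv r (\<lambda>a. P a t) 0" if t: "t \<in> {0..1}" for t
    unfolding kconv_def
  proof (intro allI impI)
    fix U :: "real set" assume "open U \<and> 0 \<in> U"
    moreover obtain a0 where "\<forall>a. (a0,a)\<in>r \<and> a\<noteq>a0 \<longrightarrow> t \<in> Bs a" using ev t by blast
    ultimately show "\<exists>a0. \<forall>a. (a0, a) \<in> r \<and> a \<noteq> a0 \<longrightarrow> P a t \<in> U" by (auto simp: P)
  qed
  have nkc: "\<not> kconv r (\<lambda>a. LINT t|?L. \<bar>P a t - 0\<bar>) 0"
  proof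
    assume "kconv r (\<lambda>a. LINT t|?L. \<bar>P a t - 0\<bar>) 0"
    then obtain a0 where "\<forall>a. (a0,a)\<in>r \<and> a\<noteq>a0 \<longrightarrow> I \<in> {..<I}"
      unfolding kconv_def intP using Ipos by (metis lessThan_iff open_lessThan)
    then show False using nomax by auto
  qed
  have "P \<in> ND r"
    unfolding ND_def
  proof (intro CollectI conjI allI exI)
    show "P a \<in> borel_measurable ?L" for a by (rule measP)
    show "integrable ?L (\<lambda>t. \<bar>q t\<bar>)" by (rule intaq)
    show "AE t in ?L. \<bar>P a t\<bar> \<le> \<bar>q t\<bar>" for a by (auto simp: P)
    show "integrable ?L (\<lambda>t. 0::real)" by simp
    show "AE t in ?L. kconv r (\<lambda>a. P a t) ((\<lambda>t. 0) t)" using kc by auto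
    show "\<not> kconv r (\<lambda>a. LINT t|?L. \<bar>P a t - (\<lambda>t. 0) t\<bar>) 0" using nkc by simp
  qed
  moreover have "\<exists>a t. P a t \<noteq> 0"
  proof (rule ccontr)
    assume "\<not> ?thesis"
    then have "(LINT t|?L. \<bar>P undefined t - 0\<bar>) = 0" by simp
    then show False using intP Ipos by simp
  qed
  ultimately show ?thesis by blast
qed



theorem mainTheorem14:
  fixes r :: "'i rel"
  assumes "card_order r"
    and "is_addN (UNIV :: 'i set)"
    and "is_covN (UNIV :: 'i set)"
  shows "strongly_c_algebrable (ND r)"
proof -
  from assms(3) obtain F where F: "F \<subseteq> nullsets01" "\<Union>F = {0..1}" "|F| =o |UNIV::'i set|"
    unfolding is_covN_def by blast
  obtain e where e: "bij_betw e (UNIV::'i set) F"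
    using F(3) card_of_ordIso ordIso_symmetric by blast
  have eF: "e ` UNIV = F" using e by (simp add: bij_betw_def)
  have addN: "\<And>G. G \<subseteq> nullsets01 \<Longrightarrow> |G| <o |UNIV::'i set| \<Longrightarrow> \<Union>G \<in> nullsets01"
    using assms(2) unfolding is_addN_def by blast
  have co: "Card_order r" "Field r = UNIV" using card_order_on_Card_order[OF assms(1)] by auto
  have rU: "r =o |UNIV::'i set|" using card_of_unique[OF assms(1)] .
  have tot: "total_on UNIV r"
    using assms(1) unfolding card_order_on_def well_order_on_def linear_order_on_def by blast
  define Bs where "Bs = (\<lambda>a. \<Union> (e ` underS r a))"
  have Bs01: "Bs a \<in> nullsets01" for a
  proof -
    have "|e ` underS r a| \<le>o |underS r a|" by (rule card_of_image)
    moreover have "|underS r a| <o r" using card_of_underS co by auto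
    ultimately have "|e ` underS r a| <o |UNIV::'i set|"
      using rU ordLeq_ordLess_trans ordLess_ordIso_trans by blast
    moreover have "e ` underS r a \<subseteq> nullsets01" using eF F(1) by blast
    ultimately show ?thesis unfolding Bs_def using addN by blast
  qed
  have Bnull: "Bs a \<in> null_sets lebesgue" for a using Bs01 unfolding nullsets01_def by blast
  have null01: "{0..1::real} \<notin> null_sets lebesgue"
  proof
    assume "{0..1::real} \<in> null_sets lebesgue"
    then have "negligible (cbox (0::real) 1)" by (simp add: negligible_iff_null_sets)
    then have "box (0::real) 1 = {}" using negligible_interval(1) by blast
    then show False by simp
  qed
  have ev: "\<forall>t\<in>{0..1}. \<exists>a0. \<forall>a. (a0,a)\<in>r \<and> a\<noteq>a0 \<longrightarrow> t \<in> Bs a"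
  proof
    fix t :: real assume "t \<in> {0..1}"
    then obtain b0 where "t \<in> e b0" using F(2) eF by blast
    show "\<exists>a0. \<forall>a. (a0,a)\<in>r \<and> a\<noteq>a0 \<longrightarrow> t \<in> Bs a"
    proof (intro exI[of _ b0] allI impI)
      fix a assume "(b0, a) \<in> r \<and> a \<noteq> b0"
      then have "b0 \<in> underS r a" by (auto simp: underS_def)
      then show "t \<in> Bs a" unfolding Bs_def using \<open>t \<in> e b0\<close> by blast
    qed
  qed
  have nomax: "\<forall>a0. \<exists>a. (a0,a)\<in>r \<and> a\<noteq>a0"
  proof (rule ccontr)
    assume "\<not> ?thesis"
    then obtain a0 where a0: "\<And>a. (a0,a)\<in>r \<Longrightarrow> a = a0" by blast
    have "{0..1} \<subseteq> Bs a0 \<union> e a0"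
    proof
      fix t :: real assume "t \<in> {0..1}"
      then obtain b where b: "t \<in> e b" using F(2) eF by blast
      show "t \<in> Bs a0 \<union> e a0"
      proof (cases "b = a0")
        case False
        then have "(b,a0) \<in> r" using tot a0 unfolding total_on_def by blast
        then show ?thesis using b False by (auto simp: Bs_def underS_def)
      qed (use b in simp)
    qed
    moreover have "Bs a0 \<union> e a0 \<in> null_sets lebesgue"
    proof -
      have "e a0 \<in> null_sets lebesgue" using eF F(1) unfolding nullsets01_def by blast
      then show ?thesis using Bnull by blast
    qed
    ultimately have "{0..1::real} \<in> null_sets lebesgue"
      using null_sets_subset[of "Bs a0 \<union> e a0" lebesgue "{0..1::real}"] by simp
    then show False using null01 by blast
  qed
  obtain H :: "real set" where
    hind: "\<And>T u v. finite T \<Longrightarrow> T \<subseteq> H \<Longrightarrow> (\<Sum>v\<in>T. real_of_rat (u v) * v) = 0 \<Longrightarrow> v \<in> T \<Longrightarrow> u v = 0"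
    and hcard: "|H| =o |UNIV :: real set|"
    using hamel by blast
  define Gen where "Gen = (\<lambda>x::real. \<lambda>a t. if t \<in> {0..1} \<and> t \<notin> Bs a then exp (x*t) else 0)"
  obtain t0 where t0: "t0 \<in> {0<..1}" "t0 \<notin> Bs undefined"
  proof -
    have "\<not> {0..1} \<subseteq> insert 0 (Bs undefined)"
    proof
      assume "{0..1} \<subseteq> insert 0 (Bs undefined)"
      then have "{0..1::real} \<in> null_sets lebesgue"
        using null_sets_subset[of "insert 0 (Bs undefined)" lebesgue "{0..1::real}"] Bnull[of undefined] by simp
      then show False using null01 by blast
    qed
    then obtain t where t: "t \<in> {0..1}" "t \<notin> insert 0 (Bs undefined)" by blast
    then have "t \<in> {0<..1}" by auto
    with t show ?thesis using that by blast
  qed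
  have injG: "inj_on Gen H"
  proof (rule inj_onI)
    fix x y assume "Gen x = Gen y"
    then have "Gen x undefined t0 = Gen y undefined t0" by simp
    then have "exp (x*t0) = exp (y*t0)" using t0 by (simp add: Gen_def)
    then show "x = y" using t0 by simp
  qed
  show ?thesis
    unfolding strongly_c_algebrable_def
  proof (intro exI[of _ "Gen ` H"] conjI allI impI ballI)
    show "G a t = 0" if "G \<in> Gen ` H" "t \<notin> {0..1}" for G a t
      using that by (auto simp: Gen_def)
    have "|Gen ` H| =o |H|"
      using injG card_of_ordIso inj_on_imp_bij_betw ordIso_symmetric by blast
    then show "|Gen ` H| =o |UNIV :: real set|" using hcard ordIso_transitive by blast
  next
    fix c assume c: "nonconst_poly_over (Gen ` H) c"
    obtain q where q: "continuous_on UNIV q" "\<exists>t\<in>{0<..<1}. q t \<noteq> 0"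
      "\<forall>a t. poly_eval c a t = (if t\<in>{0..1} \<and> t\<notin>Bs a then q t else 0)"
    proof -
      have Gx: "\<And>x. Gen x = (\<lambda>a t. if t \<in> {0..1} \<and> t \<notin> Bs a then exp (x*t) else 0)"
        by (simp add: Gen_def)
      have "\<exists>q. continuous_on UNIV q \<and> (\<exists>t\<in>{0<..<1}. q t \<noteq> 0) \<and>
           (\<forall>a t. poly_eval c a t = (if t\<in>{0..1} \<and> t\<notin>Bs a then q t else 0))"
        apply (rule poly_part[where H=H and Gen=Gen and Bs=Bs and c=c])
           apply (rule hind)
              apply assumption+
          apply (rule Gx)
         apply (rule injG)
        apply (rule c)
        done
      then show ?thesis using that by blast
    qed
    have "poly_eval c \<in> ND r \<and> (\<exists>a t. poly_eval c a t \<noteq> 0)"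
      by (rule meas_part[OF Bnull q(1) q(2) _ ev nomax]) (use q(3) in blast)
    then show "\<exists>a t. poly_eval c a t \<noteq> 0" "poly_eval c \<in> ND r" by auto
  qed
qed

end
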